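(* Let $H\trianglelefteq G\le\mathrm{Aut}~T$ be closed fractal subgroups with $H\ne1$. If $H$ is branch, then $G_H$ is branch and $$|G_H:H|=|\pi_D(G_H):\pi_D(H)|<\infty,$$ where $D$ is the depth of $H$ as a group of finite type.
   Context: $T$ is the $d$-adic rooted tree; $\mathcal L_n$ its $n$th level; $T^n$ the subtree of vertices at depth $\le n$; $\pi_n:\mathrm{Aut}~T\to\mathrm{Aut}~T^n$ restriction; congruence topology on $\mathrm{Aut}~T$. For $g\in\mathrm{Aut}~T$, vertex $v$ and $1\le n\le\infty$, the section $g|_v^n\in\mathrm{Aut}~T^n$ is defined by $(vw)^g=v^gw^{g|_v^n}$ for $w\in T^n$; write $g|_v=g|_v^\infty$. Fractal: closed under sections, level-transitive, and $\{g|_v:g\in G,v^g=v\}=G$ for all $v$. $\mathrm{rist}_G(v)$: elements fixing all non-descendants of $v$; $\mathrm{Rist}_G(n)=\prod_{v\in\mathcal L_n}\mathrm{rist}_G(v)$; $G$ branch if level-transitive and $|G:\mathrm{Rist}_G(n)|<\infty$ for all $n$. For $D\ge1$ and $\mathcal P\le\mathrm{Aut}~T^D$, $G_{\mathcal P}:=\{g:g|_v^D\in\mathcal P\ \forall v\}$; a group is of finite type of depth $D$ if it equals some such $G_{\mathcal P}$ (a closed fractal group is branch iff it is of finite type). $G_H:=\{g\in G:(g|_v)(g|_w)^{-1}\in H\ \forall v,w\}$. *)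

theory Defs
  imports "HOL-Algebra.Algebra" "HOL-Library.Sublist"
begin

text \<open>Vertices of the d-adic rooted tree T are words over {0..<d}; the root is []. The action is on the right: v^g = g v, and the product
  g h (first g, then h) is the function h o g.\<close>

definition V :: "nat \<Rightarrow> nat list set" where
  "V d = {w. set w \<subseteq> {..<d}}"

definition Lev :: "nat \<Rightarrow> nat \<Rightarrow> nat list set" where
  "Lev d n = {w \<in> V d. length w = n}"

definition Vle :: "nat \<Rightarrow> nat \<Rightarrow> nat list set" where
  "Vle d n = {w \<in> V d. length w \<le> n}"

definition is_aut_on :: "nat list set \<Rightarrow> (nat list \<Rightarrow> nat list) \<Rightarrow> bool" where
  "is_aut_on S f \<longleftrightarrow> bij_betw f S S \<and> (\<forall>w\<in>S. length (f w) = length w)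
     \<and> (\<forall>u\<in>S. \<forall>w\<in>S. prefix u w \<longrightarrow> prefix (f u) (f w)) \<and> (\<forall>w. w \<notin> S \<longrightarrow> f w = w)"

definition AutT :: "nat \<Rightarrow> (nat list \<Rightarrow> nat list) monoid" where
  "AutT d = \<lparr>carrier = {f. is_aut_on (V d) f}, monoid.mult = (\<lambda>g h. h \<circ> g), monoid.one = id\<rparr>"

definition AutTn :: "nat \<Rightarrow> nat \<Rightarrow> (nat list \<Rightarrow> nat list) monoid" where
  "AutTn d n = \<lparr>carrier = {f. is_aut_on (Vle d n) f}, monoid.mult = (\<lambda>g h. h \<circ> g), monoid.one = id\<rparr>"

definition restr :: "nat \<Rightarrow> nat \<Rightarrow> (nat list \<Rightarrow> nat list) \<Rightarrow> (nat list \<Rightarrow> nat list)" where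
  "restr d n g = (\<lambda>w. if w \<in> Vle d n then g w else w)"

text \<open>Section g|_v : (v w)^g = v^g w^(g|_v).\<close>
definition sec :: "nat \<Rightarrow> (nat list \<Rightarrow> nat list) \<Rightarrow> nat list \<Rightarrow> (nat list \<Rightarrow> nat list)" where
  "sec d g v = (\<lambda>w. if w \<in> V d then drop (length v) (g (v @ w)) else w)"

definition secn :: "nat \<Rightarrow> nat \<Rightarrow> (nat list \<Rightarrow> nat list) \<Rightarrow> nat list \<Rightarrow> (nat list \<Rightarrow> nat list)" where
  "secn d n g v = restr d n (sec d g v)"

definition closed_cong :: "nat \<Rightarrow> (nat list \<Rightarrow> nat list) set \<Rightarrow> bool" where
  "closed_cong d G \<longleftrightarrow> (\<forall>g \<in> carrier (AutT d).
      (\<forall>n. \<exists>h\<in>G. restr d n h = restr d n g) \<longrightarrow> g \<in> G)"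

definition level_transitive :: "nat \<Rightarrow> (nat list \<Rightarrow> nat list) set \<Rightarrow> bool" where
  "level_transitive d G \<longleftrightarrow> (\<forall>n. \<forall>u\<in>Lev d n. \<forall>v\<in>Lev d n. \<exists>g\<in>G. g u = v)"

definition fractal :: "nat \<Rightarrow> (nat list \<Rightarrow> nat list) set \<Rightarrow> bool" where
  "fractal d G \<longleftrightarrow> (\<forall>g\<in>G. \<forall>v\<in>V d. sec d g v \<in> G) \<and> level_transitive d G
     \<and> (\<forall>v\<in>V d. {sec d g v | g. g \<in> G \<and> g v = v} = G)"

definition rist :: "nat \<Rightarrow> (nat list \<Rightarrow> nat list) set \<Rightarrow> nat list \<Rightarrow> (nat list \<Rightarrow> nat list) set" where
  "rist d G v = {g \<in> G. \<forall>u\<in>V d. \<not> prefix v u \<longrightarrow> g u = u}"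

text \<open>Rist_G(n): the (internal direct) product of the rist_G(v), v in level n,
  i.e. the subgroup they generate.\<close>
definition Rist :: "nat \<Rightarrow> (nat list \<Rightarrow> nat list) set \<Rightarrow> nat \<Rightarrow> (nat list \<Rightarrow> nat list) set" where
  "Rist d G n = generate (AutT d) (\<Union>v\<in>Lev d n. rist d G v)"

text \<open>Set of right cosets of B in A (inside the group structure M); |A:B| is its cardinality.\<close>
definition cosets_in :: "('a, 'b) monoid_scheme \<Rightarrow> 'a set \<Rightarrow> 'a set \<Rightarrow> 'a set set" where
  "cosets_in M A B = rcosets\<^bsub>M\<lparr>carrier := A\<rparr>\<^esub> B"

definition branch :: "nat \<Rightarrow> (nat list \<Rightarrow> nat list) set \<Rightarrow> bool" where
  "branch d G \<longleftrightarrow> level_transitive d G \<and> (\<forall>n. finite (cosets_in (AutT d) G (Rist d G n)))"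

definition GP :: "nat \<Rightarrow> nat \<Rightarrow> (nat list \<Rightarrow> nat list) set \<Rightarrow> (nat list \<Rightarrow> nat list) set" where
  "GP d D P = {g \<in> carrier (AutT d). \<forall>v\<in>V d. secn d D g v \<in> P}"

definition GH :: "nat \<Rightarrow> (nat list \<Rightarrow> nat list) set \<Rightarrow> (nat list \<Rightarrow> nat list) set \<Rightarrow> (nat list \<Rightarrow> nat list) set" where
  "GH d G H = {g \<in> G. \<forall>v\<in>V d. \<forall>w\<in>V d.
       sec d g v \<otimes>\<^bsub>AutT d\<^esub> inv\<^bsub>AutT d\<^esub> (sec d g w) \<in> H}"

end

theory Submission
  imports Defs
begin


definition autgrp :: "nat list set \<Rightarrow> (nat list \<Rightarrow> nat list) monoid" where
  "autgrp S = \<lparr>carrier = {f. is_aut_on S f}, monoid.mult = (\<lambda>g h. h \<circ> g), monoid.one = id\<rparr>"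

lemma AutT_eq: "AutT d = autgrp (V d)" by (simp add: AutT_def autgrp_def)
lemma AutTn_eq: "AutTn d n = autgrp (Vle d n)" by (simp add: AutTn_def autgrp_def)

definition pclosed :: "nat list set \<Rightarrow> bool" where
  "pclosed S \<longleftrightarrow> (\<forall>w\<in>S. \<forall>u. prefix u w \<longrightarrow> u \<in> S)"

lemma pclosed_V: "pclosed (V d)"
  by (auto simp: pclosed_def V_def prefix_def)
lemma pclosed_Vle: "pclosed (Vle d n)"
  by (auto simp: pclosed_def Vle_def V_def prefix_def)

lemma prefix_same_len: "prefix a w \<Longrightarrow> prefix b w \<Longrightarrow> length a = length b \<Longrightarrow> a = b"
  by (metis prefix_length_prefix prefix_order.antisym order_refl)

lemma is_aut_comp: "is_aut_on S f \<Longrightarrow> is_aut_on S g \<Longrightarrow> is_aut_on S (g \<circ> f)"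
proof -
  assume f: "is_aut_on S f" and g: "is_aut_on S g"
  have fS: "\<And>w. w \<in> S \<Longrightarrow> f w \<in> S" using f unfolding is_aut_on_def bij_betw_def by auto
  show ?thesis using f g fS unfolding is_aut_on_def
    by (auto intro: bij_betw_trans)
qed

lemma is_aut_id: "is_aut_on S id"
  by (auto simp: is_aut_on_def)

lemma is_aut_inv:
  assumes pc: "pclosed S" and f: "is_aut_on S f"
  defines "y \<equiv> (\<lambda>w. if w \<in> S then inv_into S f w else w)"
  shows "is_aut_on S y" "f \<circ> y = id" "y \<circ> f = id"
proof -
  have bij: "bij_betw f S S" and len: "\<And>w. w \<in> S \<Longrightarrow> length (f w) = length w"
    and pre: "\<And>u w. u \<in> S \<Longrightarrow> w \<in> S \<Longrightarrow> prefix u w \<Longrightarrow> prefix (f u) (f w)"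
    and out: "\<And>w. w \<notin> S \<Longrightarrow> f w = w" using f by (auto simp: is_aut_on_def)
  have yS: "\<And>w. w \<in> S \<Longrightarrow> y w \<in> S" unfolding y_def using bij
    by (metis bij_betw_def inv_into_into)
  have fy: "\<And>w. w \<in> S \<Longrightarrow> f (y w) = w" unfolding y_def using bij
    by (simp add: bij_betw_def f_inv_into_f)
  have yf: "\<And>w. w \<in> S \<Longrightarrow> y (f w) = w" unfolding y_def using bij
    by (metis bij_betw_def bij_betw_imp_surj_on image_eqI inv_into_f_f)
  have bijy: "bij_betw y S S"
    unfolding y_def using bij_betw_inv_into[OF bij] by (simp add: bij_betw_def inj_on_def)
  have leny: "\<And>w. w \<in> S \<Longrightarrow> length (y w) = length w"
    by (metis fy len yS)
  have prey: "prefix (y u) (y w)" if u: "u \<in> S" and w: "w \<in> S" and uw: "prefix u w" for u w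
  proof -
    let ?u2 = "take (length u) (y w)"
    have u2S: "?u2 \<in> S" using pc yS[OF w] unfolding pclosed_def by (meson take_is_prefix)
    have p1: "prefix ?u2 (y w)" by (rule take_is_prefix)
    have "prefix (f ?u2) w" using pre[OF u2S yS[OF w] p1] fy[OF w] by simp
    moreover have "length (f ?u2) = length u"
      using len[OF u2S] leny[OF w] prefix_length_le[OF uw] by simp
    ultimately have "f ?u2 = u" using uw prefix_same_len by blast
    hence "?u2 = y u" using yf[OF u2S] by simp
    thus ?thesis using p1 by simp
  qed
  show "is_aut_on S y" unfolding is_aut_on_def using bijy leny prey by (auto simp: y_def)
  show "f \<circ> y = id" by (rule ext) (metis comp_apply id_apply fy out y_def)
  show "y \<circ> f = id" by (rule ext) (metis comp_apply id_apply out y_def yf)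
qed

lemma group_autgrp: assumes "pclosed S" shows "group (autgrp S)"
proof (rule groupI)
  fix x assume "x \<in> carrier (autgrp S)"
  then have x: "is_aut_on S x" by (simp add: autgrp_def)
  show "\<exists>y\<in>carrier (autgrp S). y \<otimes>\<^bsub>autgrp S\<^esub> x = \<one>\<^bsub>autgrp S\<^esub>"
    using is_aut_inv[OF assms x] by (auto simp: autgrp_def)
qed (auto simp: autgrp_def is_aut_comp is_aut_id comp_assoc)

lemma group_AutT: "group (AutT d)" by (simp add: AutT_eq group_autgrp pclosed_V)
lemma group_AutTn: "group (AutTn d n)" by (simp add: AutTn_eq group_autgrp pclosed_Vle)

abbreviation "CC d \<equiv> carrier (AutT d)"

lemma carr_iff: "g \<in> CC d \<longleftrightarrow> is_aut_on (V d) g" by (simp add: AutT_def)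
lemma mult_AutT[simp]: "g \<otimes>\<^bsub>AutT d\<^esub> h = h \<circ> g" by (simp add: AutT_def)
lemma one_AutT[simp]: "\<one>\<^bsub>AutT d\<^esub> = id" by (simp add: AutT_def)
lemma mult_AutTn[simp]: "g \<otimes>\<^bsub>AutTn d n\<^esub> h = h \<circ> g" by (simp add: AutTn_def)
lemma one_AutTn[simp]: "\<one>\<^bsub>AutTn d n\<^esub> = id" by (simp add: AutTn_def)
lemma carrn_iff: "g \<in> carrier (AutTn d n) \<longleftrightarrow> is_aut_on (Vle d n) g" by (simp add: AutTn_def)

lemma V_app[simp]: "v @ u \<in> V d \<longleftrightarrow> v \<in> V d \<and> u \<in> V d" by (auto simp: V_def)
lemma V_drop: "w \<in> V d \<Longrightarrow> drop n w \<in> V d" by (auto simp: V_def dest: in_set_dropD)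
lemma V_take: "w \<in> V d \<Longrightarrow> take n w \<in> V d" by (auto simp: V_def dest: in_set_takeD)
lemma V_Nil[simp]: "[] \<in> V d" by (simp add: V_def)

context fixes d :: nat and g assumes g: "g \<in> CC d" begin
lemma aut_V: "w \<in> V d \<Longrightarrow> g w \<in> V d" using g unfolding carr_iff is_aut_on_def bij_betw_def by auto
lemma aut_len: "w \<in> V d \<Longrightarrow> length (g w) = length w" using g unfolding carr_iff is_aut_on_def by auto
lemma aut_pre: "u \<in> V d \<Longrightarrow> w \<in> V d \<Longrightarrow> prefix u w \<Longrightarrow> prefix (g u) (g w)"
  using g unfolding carr_iff is_aut_on_def by auto
lemma aut_out: "w \<notin> V d \<Longrightarrow> g w = w" using g unfolding carr_iff is_aut_on_def by auto
lemma aut_inj: "u \<in> V d \<Longrightarrow> w \<in> V d \<Longrightarrow> g u = g w \<Longrightarrow> u = w"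
  using g unfolding carr_iff is_aut_on_def bij_betw_def inj_on_def by auto
lemma aut_inj': "g u = g w \<Longrightarrow> u = w"
  by (metis aut_V aut_inj aut_out)
lemma inv_app1: "g ((inv\<^bsub>AutT d\<^esub> g) w) = w"
proof -
  have "g \<otimes>\<^bsub>AutT d\<^esub> inv\<^bsub>AutT d\<^esub> g = id" using group.r_inv[OF group_AutT g] by simp
  hence "(inv\<^bsub>AutT d\<^esub> g \<circ> g) = id" by simp
  have "inv\<^bsub>AutT d\<^esub> g \<otimes>\<^bsub>AutT d\<^esub> g = id" using group.l_inv[OF group_AutT g] by simp
  thus ?thesis by (metis comp_apply id_apply mult_AutT)
qed
lemma inv_app2: "(inv\<^bsub>AutT d\<^esub> g) (g w) = w"
proof -
  have "g \<otimes>\<^bsub>AutT d\<^esub> inv\<^bsub>AutT d\<^esub> g = id" using group.r_inv[OF group_AutT g] by simp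
  thus ?thesis by (metis comp_apply id_apply mult_AutT)
qed

lemma sec_app: "v \<in> V d \<Longrightarrow> u \<in> V d \<Longrightarrow> g (v @ u) = g v @ sec d g v u"
proof -
  assume v: "v \<in> V d" and u: "u \<in> V d"
  have "prefix (g v) (g (v @ u))" using aut_pre[of v "v@u"] v u by simp
  then obtain z where "g (v @ u) = g v @ z" by (auto simp: prefix_def)
  moreover have "length (g v) = length v" using aut_len v by simp
  ultimately show ?thesis using u by (simp add: sec_def)
qed

lemma sec_nil: "sec d g [] = g"
  by (rule ext) (simp add: sec_def aut_out)

lemma sec_carrier: assumes v: "v \<in> V d" shows "sec d g v \<in> CC d"
proof -
  let ?s = "sec d g v"
  have sV: "u \<in> V d \<Longrightarrow> ?s u \<in> V d" for u using aut_V[of "v@u"] v by (simp add: sec_def V_drop)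
  have slen: "u \<in> V d \<Longrightarrow> length (?s u) = length u" for u using aut_len[of "v@u"] v by (simp add: sec_def)
  have inj: "inj_on ?s (V d)"
  proof (rule inj_onI)
    fix u1 u2 assume u1: "u1 \<in> V d" and u2: "u2 \<in> V d" and e: "?s u1 = ?s u2"
    have "g (v @ u1) = g (v @ u2)" using sec_app[OF v u1] sec_app[OF v u2] e by simp
    hence "v @ u1 = v @ u2" using aut_inj[of "v@u1" "v@u2"] v u1 u2 by simp
    thus "u1 = u2" by simp
  qed
  have surj: "V d \<subseteq> ?s ` V d"
  proof
    fix u assume u: "u \<in> V d"
    define w where "w = (inv\<^bsub>AutT d\<^esub> g) (g v @ u)"
    have gw: "g w = g v @ u" using inv_app1 w_def by simp
    have wV: "w \<in> V d" by (metis aut_out gw aut_V V_app u v)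
    have lw: "length w = length v + length u" using aut_len[OF wV] aut_len[OF v] gw by simp
    have tV: "take (length v) w \<in> V d" using V_take wV by blast
    have "prefix (g (take (length v) w)) (g w)" using aut_pre[OF tV wV] take_is_prefix by blast
    moreover have "prefix (g v) (g w)" using gw by simp
    moreover have "length (g (take (length v) w)) = length (g v)" using aut_len tV v lw by simp
    ultimately have "g (take (length v) w) = g v" using prefix_same_len by blast
    hence tv: "take (length v) w = v" using aut_inj tV v by blast
    have wsplit: "w = v @ drop (length v) w" using tv by (metis append_take_drop_id)
    have dV: "drop (length v) w \<in> V d" using V_drop wV by blast
    have "?s (drop (length v) w) = u"
      using sec_app[OF v dV] wsplit gw by simp
    thus "u \<in> ?s ` V d" using dV by blast
  qed
  have bij: "bij_betw ?s (V d) (V d)" using inj surj sV unfolding bij_betw_def by auto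
  have pre: "prefix (?s u1) (?s u2)" if "u1 \<in> V d" "u2 \<in> V d" "prefix u1 u2" for u1 u2
  proof -
    have "prefix (g (v @ u1)) (g (v @ u2))" using aut_pre that v by simp
    thus ?thesis using sec_app[OF v] that by simp
  qed
  show ?thesis unfolding carr_iff is_aut_on_def using bij slen pre by (auto simp: sec_def)
qed
end

lemma sec_id: "v \<in> V d \<Longrightarrow> sec d id v = id"
  by (rule ext) (simp add: sec_def)

lemma sec_mult: assumes g: "g \<in> CC d" and k: "k \<in> CC d" and v: "v \<in> V d"
  shows "sec d (g \<otimes>\<^bsub>AutT d\<^esub> k) v = sec d g v \<otimes>\<^bsub>AutT d\<^esub> sec d k (g v)"
proof (rule ext)
  fix u show "sec d (g \<otimes>\<^bsub>AutT d\<^esub> k) v u = (sec d g v \<otimes>\<^bsub>AutT d\<^esub> sec d k (g v)) u"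
  proof (cases "u \<in> V d")
    case True
    have gv: "g v \<in> V d" using aut_V[OF g v] .
    have sV: "sec d g v u \<in> V d" using sec_carrier[OF g v] aut_V True by blast
    have "(k \<circ> g) (v @ u) = k (g v) @ sec d k (g v) (sec d g v u)"
      using sec_app[OF g v True] sec_app[OF k gv sV] by simp
    moreover have "length (k (g v)) = length v" using aut_len[OF k gv] aut_len[OF g v] by simp
    ultimately show ?thesis using True sV by (simp add: sec_def)
  next
    case False thus ?thesis by (simp add: sec_def)
  qed
qed

lemma sec_sec: assumes g: "g \<in> CC d" and v: "v \<in> V d" and w: "w \<in> V d"
  shows "sec d (sec d g v) w = sec d g (v @ w)"
proof (rule ext)
  fix u show "sec d (sec d g v) w u = sec d g (v @ w) u"
    using v w by (cases "u \<in> V d") (simp_all add: sec_def add.commute)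
qed

lemma restr_eq_iff: "restr d n a = restr d n b \<longleftrightarrow> (\<forall>w\<in>Vle d n. a w = b w)"
  unfolding restr_def by (auto simp: fun_eq_iff)

lemma restr_mono: "restr d n a = restr d n b \<Longrightarrow> m \<le> n \<Longrightarrow> restr d m a = restr d m b"
  unfolding restr_eq_iff Vle_def by auto

lemma restr_id_iff: "restr d n a = id \<longleftrightarrow> (\<forall>w\<in>Vle d n. a w = w)"
  unfolding restr_def by (auto simp: fun_eq_iff)

lemma restr_carrier: assumes g: "g \<in> CC d" shows "restr d n g \<in> carrier (AutTn d n)"
proof -
  let ?r = "restr d n g"
  have gVle: "w \<in> Vle d n \<Longrightarrow> g w \<in> Vle d n" for w using aut_V[OF g] aut_len[OF g] by (auto simp: Vle_def)
  have inj: "inj_on ?r (Vle d n)" by (rule inj_onI) (auto simp: restr_def Vle_def dest: aut_inj[OF g])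
  have surj: "Vle d n \<subseteq> ?r ` Vle d n"
  proof
    fix w assume w: "w \<in> Vle d n"
    let ?u = "(inv\<^bsub>AutT d\<^esub> g) w"
    have gu: "g ?u = w" by (rule inv_app1[OF g])
    have uV: "?u \<in> V d" using w gu aut_out[OF g, of ?u] by (auto simp: Vle_def) metis
    have "?u \<in> Vle d n" using uV aut_len[OF g uV] gu w by (auto simp: Vle_def)
    thus "w \<in> ?r ` Vle d n" using gu by (force simp: restr_def)
  qed
  have bij: "bij_betw ?r (Vle d n) (Vle d n)" using inj surj gVle by (auto simp: bij_betw_def restr_def)
  show ?thesis unfolding carrn_iff is_aut_on_def using bij aut_len[OF g] aut_pre[OF g]
    by (auto simp: restr_def Vle_def)
qed

lemma restr_mult: assumes g: "g \<in> CC d" and k: "k \<in> CC d"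
  shows "restr d n (g \<otimes>\<^bsub>AutT d\<^esub> k) = restr d n g \<otimes>\<^bsub>AutTn d n\<^esub> restr d n k"
proof (rule ext)
  fix w
  have "w \<in> Vle d n \<Longrightarrow> g w \<in> Vle d n" using aut_V[OF g] aut_len[OF g] by (auto simp: Vle_def)
  thus "restr d n (g \<otimes>\<^bsub>AutT d\<^esub> k) w = (restr d n g \<otimes>\<^bsub>AutTn d n\<^esub> restr d n k) w"
    by (auto simp: restr_def)
qed

lemma restr_hom: "restr d n \<in> hom (AutT d) (AutTn d n)"
  by (rule homI) (simp_all add: restr_carrier, metis restr_mult mult_AutT mult_AutTn)

lemma restr_group_hom: "group_hom (AutT d) (AutTn d n) (restr d n)"
  by (simp add: group_hom.intro group_hom_axioms.intro group_AutT group_AutTn restr_hom)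

lemma restr_one: "restr d n id = id" by (simp add: restr_def fun_eq_iff)

lemma restr_inv: "g \<in> CC d \<Longrightarrow> restr d n (inv\<^bsub>AutT d\<^esub> g) = inv\<^bsub>AutTn d n\<^esub> (restr d n g)"
  using group_hom.hom_inv[OF restr_group_hom] by blast

lemma cosets_in_eq: "cosets_in M A B = (\<lambda>a. B #>\<^bsub>M\<^esub> a) ` A"
  unfolding cosets_in_def RCOSETS_def r_coset_def by auto

lemma rcos_AutT: "B #>\<^bsub>AutT d\<^esub> a = (\<lambda>h. h \<otimes>\<^bsub>AutT d\<^esub> a) ` B"
  unfolding r_coset_def by auto
lemma rcos_AutTn: "B #>\<^bsub>AutTn d n\<^esub> a = (\<lambda>h. h \<otimes>\<^bsub>AutTn d n\<^esub> a) ` B"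
  unfolding r_coset_def by auto

lemma finite_Vle: "finite (Vle d n)"
proof -
  have "Vle d n = {xs. set xs \<subseteq> {..<d} \<and> length xs \<le> n}" by (auto simp: Vle_def V_def)
  thus ?thesis using finite_lists_length_le[of "{..<d}" n] by simp
qed

lemma finite_carrn: "finite (carrier (AutTn d n))"
proof -
  let ?S = "Vle d n"
  have "(\<lambda>f. restrict f ?S) ` carrier (AutTn d n) \<subseteq> PiE ?S (\<lambda>_. ?S)"
    by (auto simp: carrn_iff is_aut_on_def bij_betw_def) blast
  hence fin: "finite ((\<lambda>f. restrict f ?S) ` carrier (AutTn d n))"
    by (rule finite_subset) (simp add: finite_PiE finite_Vle)
  have "inj_on (\<lambda>f. restrict f ?S) (carrier (AutTn d n))"
  proof (rule inj_onI)
    fix f g assume f: "f \<in> carrier (AutTn d n)" and g: "g \<in> carrier (AutTn d n)"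
      and e: "restrict f ?S = restrict g ?S"
    show "f = g"
    proof (rule ext)
      fix w show "f w = g w"
      proof (cases "w \<in> ?S")
        case True thus ?thesis using e by (metis restrict_apply')
      next
        case False thus ?thesis using f g by (auto simp: carrn_iff is_aut_on_def)
      qed
    qed
  qed
  thus ?thesis using fin finite_imageD by blast
qed

lemma sec_in: "fractal d K \<Longrightarrow> g \<in> K \<Longrightarrow> v \<in> V d \<Longrightarrow> sec d g v \<in> K"
  unfolding fractal_def by blast

locale setting =
  fixes d :: nat and G H :: "(nat list \<Rightarrow> nat list) set"
  assumes sgG: "subgroup G (AutT d)" and sgH: "subgroup H (AutT d)" and HG: "H \<subseteq> G"
    and nrm: "\<And>x h. x \<in> G \<Longrightarrow> h \<in> H \<Longrightarrow> x \<otimes>\<^bsub>AutT d\<^esub> h \<otimes>\<^bsub>AutT d\<^esub> inv\<^bsub>AutT d\<^esub> x \<in> H"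
    and clH: "closed_cong d H" and frG: "fractal d G" and frH: "fractal d H"
    and brH: "branch d H"
begin

abbreviation "A \<equiv> AutT d"

lemma grp: "group A" by (rule group_AutT)
sublocale A: group "AutT d" by (rule group_AutT)

lemma A_cancel1: "x \<in> CC d \<Longrightarrow> y \<in> CC d \<Longrightarrow> inv\<^bsub>A\<^esub> x \<otimes>\<^bsub>A\<^esub> (x \<otimes>\<^bsub>A\<^esub> y) = y"
  by (simp add: A.m_assoc[symmetric] del: mult_AutT one_AutT)
lemma A_cancel2: "x \<in> CC d \<Longrightarrow> y \<in> CC d \<Longrightarrow> x \<otimes>\<^bsub>A\<^esub> (inv\<^bsub>A\<^esub> x \<otimes>\<^bsub>A\<^esub> y) = y"
  by (simp add: A.m_assoc[symmetric] del: mult_AutT one_AutT)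
lemma HC: "H \<subseteq> CC d" using sgH subgroup.subset by blast
lemma GC: "G \<subseteq> CC d" using sgG subgroup.subset by blast

lemma GH_sub_G: "GH d G H \<subseteq> G" by (auto simp: GH_def)

lemma H_sub_GH: "H \<subseteq> GH d G H"
proof
  fix h assume h: "h \<in> H"
  show "h \<in> GH d G H" unfolding GH_def
    using h HG sec_in[OF frH h] subgroup.m_closed[OF sgH] subgroup.m_inv_closed[OF sgH] by auto
qed

lemma GH_subgroup: "subgroup (GH d G H) A"
proof (rule group.subgroupI[OF grp])
  show "GH d G H \<subseteq> CC d" using GH_sub_G GC by blast
  show "GH d G H \<noteq> {}" using H_sub_GH subgroup.one_closed[OF sgH] by blast
next
  fix g assume g: "g \<in> GH d G H"
  have gG: "g \<in> G" and gC: "g \<in> CC d" using g GH_sub_G GC by auto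
  have cond: "\<And>v w. v \<in> V d \<Longrightarrow> w \<in> V d \<Longrightarrow> sec d g v \<otimes>\<^bsub>A\<^esub> inv\<^bsub>A\<^esub> sec d g w \<in> H"
    using g by (auto simp: GH_def)
  let ?i = "inv\<^bsub>A\<^esub> g"
  have iC: "?i \<in> CC d" using group.inv_closed[OF grp gC] .
  have iG: "?i \<in> G" using subgroup.m_inv_closed[OF sgG gG] .
  have seci: "sec d ?i v = inv\<^bsub>A\<^esub> (sec d g (?i v))" if v: "v \<in> V d" for v
  proof -
    have iv: "?i v \<in> V d" using aut_V[OF iC v] .
    have "sec d (?i \<otimes>\<^bsub>A\<^esub> g) v = sec d ?i v \<otimes>\<^bsub>A\<^esub> sec d g (?i v)" by (rule sec_mult[OF iC gC v])
    moreover have "?i \<otimes>\<^bsub>A\<^esub> g = id" using group.l_inv[OF grp gC] by simp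
    ultimately have "sec d ?i v \<otimes>\<^bsub>A\<^esub> sec d g (?i v) = \<one>\<^bsub>A\<^esub>" using sec_id[OF v] by simp
    thus ?thesis using group.inv_equality[OF grp _ sec_carrier[OF gC iv] sec_carrier[OF iC v]]
      by (simp del: mult_AutT)
  qed
  show "?i \<in> GH d G H" unfolding GH_def
  proof (intro CollectI conjI ballI iG)
    fix v w assume v: "v \<in> V d" and w: "w \<in> V d"
    let ?a = "sec d g (?i v)" and ?b = "sec d g (?i w)"
    have iv: "?i v \<in> V d" and iw: "?i w \<in> V d" using aut_V[OF iC] v w by auto
    have aG: "?a \<in> G" and bG: "?b \<in> G" using sec_in[OF frG gG] iv iw by auto
    have aC: "?a \<in> CC d" and bC: "?b \<in> CC d" using aG bG GC by auto
    have ab: "?a \<otimes>\<^bsub>A\<^esub> inv\<^bsub>A\<^esub> ?b \<in> H" using cond iv iw by blast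
    have "inv\<^bsub>A\<^esub> (?a \<otimes>\<^bsub>A\<^esub> inv\<^bsub>A\<^esub> ?b) \<in> H" using subgroup.m_inv_closed[OF sgH ab] .
    hence "inv\<^bsub>A\<^esub> ?a \<otimes>\<^bsub>A\<^esub> inv\<^bsub>A\<^esub> (?a \<otimes>\<^bsub>A\<^esub> inv\<^bsub>A\<^esub> ?b) \<otimes>\<^bsub>A\<^esub> inv\<^bsub>A\<^esub> (inv\<^bsub>A\<^esub> ?a) \<in> H"
      using nrm subgroup.m_inv_closed[OF sgG aG] by blast
    moreover have "inv\<^bsub>A\<^esub> ?a \<otimes>\<^bsub>A\<^esub> inv\<^bsub>A\<^esub> (?a \<otimes>\<^bsub>A\<^esub> inv\<^bsub>A\<^esub> ?b) \<otimes>\<^bsub>A\<^esub> inv\<^bsub>A\<^esub> (inv\<^bsub>A\<^esub> ?a)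
       = inv\<^bsub>A\<^esub> ?a \<otimes>\<^bsub>A\<^esub> ?b"
      using aC bC by (simp add: A.inv_mult_group A.m_assoc del: mult_AutT one_AutT)
    ultimately show "sec d ?i v \<otimes>\<^bsub>A\<^esub> inv\<^bsub>A\<^esub> sec d ?i w \<in> H"
      using seci v w bC by (simp add: group.inv_inv[OF grp] del: mult_AutT)
  qed
next
  fix g k assume g: "g \<in> GH d G H" and k: "k \<in> GH d G H"
  have gG: "g \<in> G" and gC: "g \<in> CC d" using g GH_sub_G GC by auto
  have kG: "k \<in> G" and kC: "k \<in> CC d" using k GH_sub_G GC by auto
  have condg: "\<And>v w. v \<in> V d \<Longrightarrow> w \<in> V d \<Longrightarrow> sec d g v \<otimes>\<^bsub>A\<^esub> inv\<^bsub>A\<^esub> sec d g w \<in> H"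
    using g by (auto simp: GH_def)
  have condk: "\<And>v w. v \<in> V d \<Longrightarrow> w \<in> V d \<Longrightarrow> sec d k v \<otimes>\<^bsub>A\<^esub> inv\<^bsub>A\<^esub> sec d k w \<in> H"
    using k by (auto simp: GH_def)
  show "g \<otimes>\<^bsub>A\<^esub> k \<in> GH d G H" unfolding GH_def
  proof (intro CollectI conjI ballI)
    show "g \<otimes>\<^bsub>A\<^esub> k \<in> G" using subgroup.m_closed[OF sgG gG kG] .
    fix v w assume v: "v \<in> V d" and w: "w \<in> V d"
    let ?a = "sec d g v" and ?b = "sec d g w" and ?c = "sec d k (g v)" and ?e = "sec d k (g w)"
    have gv: "g v \<in> V d" and gw: "g w \<in> V d" using aut_V[OF gC] v w by auto
    have aG: "?a \<in> G" using sec_in[OF frG gG v] .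
    have aC: "?a \<in> CC d" and bC: "?b \<in> CC d" and cC: "?c \<in> CC d" and eC: "?e \<in> CC d"
      using sec_carrier gC kC v w gv gw by auto
    have h1: "?a \<otimes>\<^bsub>A\<^esub> (?c \<otimes>\<^bsub>A\<^esub> inv\<^bsub>A\<^esub> ?e) \<otimes>\<^bsub>A\<^esub> inv\<^bsub>A\<^esub> ?a \<in> H"
      using nrm[OF aG condk[OF gv gw]] .
    have h2: "?a \<otimes>\<^bsub>A\<^esub> inv\<^bsub>A\<^esub> ?b \<in> H" using condg v w by blast
    have "(?a \<otimes>\<^bsub>A\<^esub> (?c \<otimes>\<^bsub>A\<^esub> inv\<^bsub>A\<^esub> ?e) \<otimes>\<^bsub>A\<^esub> inv\<^bsub>A\<^esub> ?a) \<otimes>\<^bsub>A\<^esub> (?a \<otimes>\<^bsub>A\<^esub> inv\<^bsub>A\<^esub> ?b) \<in> H"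
      using subgroup.m_closed[OF sgH h1 h2] .
    moreover have "(?a \<otimes>\<^bsub>A\<^esub> (?c \<otimes>\<^bsub>A\<^esub> inv\<^bsub>A\<^esub> ?e) \<otimes>\<^bsub>A\<^esub> inv\<^bsub>A\<^esub> ?a) \<otimes>\<^bsub>A\<^esub> (?a \<otimes>\<^bsub>A\<^esub> inv\<^bsub>A\<^esub> ?b)
      = (?a \<otimes>\<^bsub>A\<^esub> ?c) \<otimes>\<^bsub>A\<^esub> inv\<^bsub>A\<^esub> (?b \<otimes>\<^bsub>A\<^esub> ?e)"
      using aC bC cC eC
      by (simp add: A.inv_mult_group A.m_assoc A_cancel1 del: mult_AutT one_AutT)
    ultimately show "sec d (g \<otimes>\<^bsub>A\<^esub> k) v \<otimes>\<^bsub>A\<^esub> inv\<^bsub>A\<^esub> sec d (g \<otimes>\<^bsub>A\<^esub> k) w \<in> H"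
      using sec_mult[OF gC kC v] sec_mult[OF gC kC w] by (simp del: mult_AutT)
  qed
qed

end

context setting begin

lemma key:
  assumes HP: "H = GP d D P" and f: "f \<in> GH d G H" and rf: "restr d D f = id"
  shows "f \<in> H"
proof -
  have fG: "f \<in> G" and fC: "f \<in> CC d" using f GH_sub_G GC by auto
  have "\<forall>v\<in>V d. secn d D f v \<in> P"
  proof
    fix v assume v: "v \<in> V d"
    define a where "a = sec d f v \<otimes>\<^bsub>A\<^esub> inv\<^bsub>A\<^esub> sec d f []"
    have aH: "a \<in> H" using f v by (auto simp: GH_def a_def)
    have aC: "a \<in> CC d" using aH HC by auto
    have sv: "sec d f v = a \<otimes>\<^bsub>A\<^esub> f"
      using sec_carrier[OF fC v] fC unfolding a_def by (simp add: sec_nil[OF fC] A.m_assoc del: mult_AutT one_AutT)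
    have "secn d D f v = restr d D a \<otimes>\<^bsub>AutTn d D\<^esub> restr d D f"
      unfolding secn_def sv using restr_mult[OF aC fC] by simp
    also have "\<dots> = restr d D a" using rf by simp
    also have "\<dots> = secn d D a []" by (simp add: secn_def sec_nil[OF aC])
    also have "\<dots> \<in> P" using aH HP by (auto simp: GP_def)
    finally show "secn d D f v \<in> P" .
  qed
  thus ?thesis using HP fC by (simp add: GP_def)
qed

lemma part2:
  assumes HP: "H = GP d D P"
  shows "finite (cosets_in A (GH d G H) H) \<and>
       card (cosets_in A (GH d G H) H) =
         card (cosets_in (AutTn d D) (restr d D ` GH d G H) (restr d D ` H))"
proof -
  let ?K = "GH d G H" and ?B = "AutTn d D" and ?r = "restr d D"
  interpret B: group ?B by (rule group_AutTn)
  have KC: "?K \<subseteq> CC d" using GH_sub_G GC by auto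
  have img: "?r ` (H #>\<^bsub>A\<^esub> g) = (?r ` H) #>\<^bsub>?B\<^esub> ?r g" if g: "g \<in> CC d" for g
  proof -
    have "?r ` (H #>\<^bsub>A\<^esub> g) = (\<lambda>h. ?r h \<otimes>\<^bsub>?B\<^esub> ?r g) ` H"
      unfolding rcos_AutT image_image using restr_mult[OF _ g] HC by (intro image_cong) (auto simp del: mult_AutT mult_AutTn)
    also have "\<dots> = (?r ` H) #>\<^bsub>?B\<^esub> ?r g" unfolding rcos_AutTn by auto
    finally show ?thesis .
  qed
  have surj: "(image ?r) ` cosets_in A ?K H = cosets_in ?B (?r ` ?K) (?r ` H)"
    unfolding cosets_in_eq image_image using img KC by (auto simp del: mult_AutT mult_AutTn)
  have inj: "inj_on (image ?r) (cosets_in A ?K H)"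
  proof (rule inj_onI)
    fix XX YY assume X: "XX \<in> cosets_in A ?K H" and Y: "YY \<in> cosets_in A ?K H" and e: "?r ` XX = ?r ` YY"
    obtain g1 where g1: "g1 \<in> ?K" and X1: "XX = H #>\<^bsub>A\<^esub> g1" using X unfolding cosets_in_eq by auto
    obtain g2 where g2: "g2 \<in> ?K" and Y2: "YY = H #>\<^bsub>A\<^esub> g2" using Y unfolding cosets_in_eq by auto
    have g1C: "g1 \<in> CC d" and g2C: "g2 \<in> CC d" using g1 g2 KC by auto
    have "g1 \<in> XX" unfolding X1 rcos_AutT using subgroup.one_closed[OF sgH]
      by (intro image_eqI[where x="\<one>\<^bsub>A\<^esub>"]) auto
    hence "?r g1 \<in> ?r ` YY" using e by blast
    then obtain h where hH: "h \<in> H" and rh: "?r g1 = ?r (h \<otimes>\<^bsub>A\<^esub> g2)"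
      unfolding Y2 rcos_AutT by auto
    have hC: "h \<in> CC d" using hH HC by auto
    have hg2: "h \<otimes>\<^bsub>A\<^esub> g2 \<in> ?K" using subgroup.m_closed[OF GH_subgroup] H_sub_GH hH g2 by blast
    have hg2C: "h \<otimes>\<^bsub>A\<^esub> g2 \<in> CC d" using hg2 KC by auto
    let ?f = "g1 \<otimes>\<^bsub>A\<^esub> inv\<^bsub>A\<^esub> (h \<otimes>\<^bsub>A\<^esub> g2)"
    have fK: "?f \<in> ?K" using subgroup.m_closed[OF GH_subgroup] subgroup.m_inv_closed[OF GH_subgroup] g1 hg2 by blast
    have "?r ?f = ?r g1 \<otimes>\<^bsub>?B\<^esub> inv\<^bsub>?B\<^esub> (?r (h \<otimes>\<^bsub>A\<^esub> g2))"
      using restr_mult[OF g1C A.inv_closed[OF hg2C]] restr_inv[OF hg2C] by (simp del: mult_AutT mult_AutTn)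
    also have "\<dots> = \<one>\<^bsub>?B\<^esub>" using rh restr_carrier[OF hg2C] by (simp del: mult_AutT mult_AutTn one_AutTn)
    finally have "?r ?f = id" by simp
    hence fH: "?f \<in> H" using key[OF HP fK] by simp
    have "g1 = (?f \<otimes>\<^bsub>A\<^esub> h) \<otimes>\<^bsub>A\<^esub> g2"
      using g1C hC g2C by (simp add: A.m_assoc A.inv_mult_group A_cancel1 del: mult_AutT one_AutT)
    moreover have "?f \<otimes>\<^bsub>A\<^esub> h \<in> H" using subgroup.m_closed[OF sgH fH hH] .
    ultimately have "g1 \<in> H #>\<^bsub>A\<^esub> g2" unfolding rcos_AutT by (auto simp del: mult_AutT)
    hence "H #>\<^bsub>A\<^esub> g2 = H #>\<^bsub>A\<^esub> g1" using A.repr_independence[OF _ g2C sgH] by blast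
    thus "XX = YY" using X1 Y2 by simp
  qed
  have fin: "finite (cosets_in ?B (?r ` ?K) (?r ` H))"
  proof -
    have "cosets_in ?B (?r ` ?K) (?r ` H) \<subseteq> Pow (carrier ?B)"
    proof -
      have "?r ` H \<subseteq> carrier ?B" using restr_carrier HC by blast
      moreover have "?r ` ?K \<subseteq> carrier ?B" using restr_carrier KC by blast
      ultimately show ?thesis unfolding cosets_in_eq using B.r_coset_subset_G by blast
    qed
    thus ?thesis using finite_carrn finite_subset by (metis finite_Pow_iff)
  qed
  have bij: "bij_betw (image ?r) (cosets_in A ?K H) (cosets_in ?B (?r ` ?K) (?r ` H))"
    using inj surj by (simp add: bij_betw_def)
  show ?thesis using bij fin bij_betw_finite bij_betw_same_card by blast
qed

end




lemma sec_inv: assumes gC: "g \<in> CC d" and v: "v \<in> V d"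
  shows "sec d (inv\<^bsub>AutT d\<^esub> g) v = inv\<^bsub>AutT d\<^esub> (sec d g ((inv\<^bsub>AutT d\<^esub> g) v))"
proof -
  let ?i = "inv\<^bsub>AutT d\<^esub> g"
  have iC: "?i \<in> CC d" using group.inv_closed[OF group_AutT gC] .
  have iv: "?i v \<in> V d" using aut_V[OF iC v] .
  have "sec d (?i \<otimes>\<^bsub>AutT d\<^esub> g) v = sec d ?i v \<otimes>\<^bsub>AutT d\<^esub> sec d g (?i v)" by (rule sec_mult[OF iC gC v])
  moreover have "?i \<otimes>\<^bsub>AutT d\<^esub> g = id" using group.l_inv[OF group_AutT gC] by simp
  ultimately have "sec d ?i v \<otimes>\<^bsub>AutT d\<^esub> sec d g (?i v) = \<one>\<^bsub>AutT d\<^esub>" using sec_id[OF v] by simp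
  thus ?thesis using group.inv_equality[OF group_AutT _ sec_carrier[OF gC iv] sec_carrier[OF iC v]]
    by (simp del: mult_AutT)
qed

definition lift :: "nat \<Rightarrow> nat list \<Rightarrow> (nat list \<Rightarrow> nat list) \<Rightarrow> (nat list \<Rightarrow> nat list)" where
  "lift d x k = (\<lambda>w. if w \<in> V d \<and> prefix x w then x @ k (drop (length x) w) else w)"

lemma prefix_iff_take: "prefix x w \<longleftrightarrow> length x \<le> length w \<and> take (length x) w = x"
  by (metis prefix_def append_eq_conv_conj prefix_length_le take_is_prefix)

lemma lift_desc: "x @ u \<in> V d \<Longrightarrow> lift d x k (x @ u) = x @ k u"
  by (simp add: lift_def)

lemma lift_carrier: assumes x: "x \<in> V d" and k: "k \<in> CC d" shows "lift d x k \<in> CC d"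
proof -
  let ?l = "lift d x k"
  have lV: "w \<in> V d \<Longrightarrow> ?l w \<in> V d" for w
    using x aut_V[OF k] V_drop by (auto simp: lift_def)
  have llen: "w \<in> V d \<Longrightarrow> length (?l w) = length w" for w
    using x aut_len[OF k] V_drop by (auto simp: lift_def dest: prefix_length_le)
  have desc: "w \<in> V d \<Longrightarrow> prefix x w \<Longrightarrow> prefix x (?l w)" for w by (simp add: lift_def)
  have ndesc: "\<not> prefix x w \<Longrightarrow> ?l w = w" for w by (simp add: lift_def)
  have inj: "inj_on ?l (V d)"
  proof (rule inj_onI)
    fix u w assume u: "u \<in> V d" and w: "w \<in> V d" and e: "?l u = ?l w"
    show "u = w"
    proof (cases "prefix x u"; cases "prefix x w")
      assume pu: "prefix x u" and pw: "prefix x w"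
      obtain u' where u': "u = x @ u'" using pu prefix_def by blast
      obtain w' where w': "w = x @ w'" using pw prefix_def by blast
      have "k u' = k w'" using e u w by (simp add: u' w' lift_desc)
      thus ?thesis using aut_inj'[OF k] u' w' by simp
    next
      assume pu: "prefix x u" and pw: "\<not> prefix x w"
      have "prefix x (?l u)" using desc u pu by blast
      thus ?thesis using e ndesc pw by simp
    next
      assume pu: "\<not> prefix x u" and pw: "prefix x w"
      have "prefix x (?l w)" using desc w pw by blast
      thus ?thesis using e ndesc pu by simp
    next
      assume "\<not> prefix x u" "\<not> prefix x w" thus ?thesis using e ndesc by simp
    qed
  qed
  have surj: "V d \<subseteq> ?l ` V d"
  proof
    fix w assume w: "w \<in> V d"
    show "w \<in> ?l ` V d"
    proof (cases "prefix x w")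
      case True
      then obtain w' where w': "w = x @ w'" using prefix_def by blast
      let ?u = "(inv\<^bsub>AutT d\<^esub> k) w'"
      have w'V: "w' \<in> V d" using w w' by simp
      have uV: "?u \<in> V d" using aut_V[OF group.inv_closed[OF group_AutT k] w'V] .
      have "?l (x @ ?u) = w" using lift_desc[of x ?u d k] x uV w' inv_app1[OF k] by simp
      moreover have "x @ ?u \<in> V d" using x uV by simp
      ultimately show ?thesis by blast
    next
      case False thus ?thesis using w ndesc by force
    qed
  qed
  have bij: "bij_betw ?l (V d) (V d)" using inj surj lV by (auto simp: bij_betw_def)
  have pre: "prefix (?l u) (?l w)" if u: "u \<in> V d" and w: "w \<in> V d" and uw: "prefix u w" for u w
  proof (cases "prefix x u")
    case True
    obtain u' where u': "u = x @ u'" using True prefix_def by blast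
    obtain w' where w': "w = x @ w'" using True uw prefix_def by (metis prefix_order.trans)
    have "prefix u' w'" using uw u' w' by simp
    moreover have "u' \<in> V d" "w' \<in> V d" using u w u' w' by auto
    ultimately have "prefix (k u') (k w')" using aut_pre[OF k] by blast
    thus ?thesis using u w by (simp add: u' w' lift_desc)
  next
    case False
    hence lu: "?l u = u" using ndesc by blast
    show ?thesis
    proof (cases "prefix x w")
      case True
      have "prefix u x" using uw True False prefix_same_cases by blast
      moreover have "prefix x (?l w)" using desc w True by blast
      ultimately show ?thesis using lu by (metis prefix_order.trans)
    next
      case False thus ?thesis using lu ndesc uw by simp
    qed
  qed
  show ?thesis unfolding carr_iff is_aut_on_def using bij llen pre by (auto simp: lift_def)
qed


lemma sec_lift: assumes x: "x \<in> V d" and k: "k \<in> CC d" shows "sec d (lift d x k) x = k"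
proof (rule ext)
  fix u show "sec d (lift d x k) x u = k u"
  proof (cases "u \<in> V d")
    case True
    have "lift d x k (x @ u) = x @ k u" using lift_desc[of x u d k] x True by simp
    thus ?thesis using True by (simp add: sec_def)
  next
    case False thus ?thesis using aut_out[OF k False] by (simp add: sec_def)
  qed
qed

lemma lift_mult: assumes x: "x \<in> V d" and k1: "k1 \<in> CC d" and k2: "k2 \<in> CC d"
  shows "lift d x (k1 \<otimes>\<^bsub>AutT d\<^esub> k2) = lift d x k1 \<otimes>\<^bsub>AutT d\<^esub> lift d x k2"
proof (rule ext)
  fix w show "lift d x (k1 \<otimes>\<^bsub>AutT d\<^esub> k2) w = (lift d x k1 \<otimes>\<^bsub>AutT d\<^esub> lift d x k2) w"
  proof (cases "w \<in> V d \<and> prefix x w")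
    case True
    then obtain u where u: "w = x @ u" using prefix_def by blast
    have uV: "u \<in> V d" using True u by simp
    have "k1 u \<in> V d" using aut_V[OF k1 uV] .
    thus ?thesis using True x uV by (simp add: u lift_desc)
  next
    case False thus ?thesis by (auto simp: lift_def)
  qed
qed

lemma lift_id: "lift d x id = id"
  by (rule ext) (auto simp: lift_def prefix_def)

lemma rist_fix: assumes r: "r \<in> CC d" and x: "x \<in> V d"
  and fix_nd: "\<And>u. u \<in> V d \<Longrightarrow> \<not> prefix x u \<Longrightarrow> r u = u"
  shows "r x = x"
proof (rule ccontr)
  assume ne: "r x \<noteq> x"
  have rxV: "r x \<in> V d" using aut_V[OF r x] .
  have "length (r x) = length x" using aut_len[OF r x] .
  hence "\<not> prefix x (r x)" using ne prefix_same_len[of x "r x" "r x"] by auto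
  hence "r (r x) = r x" using fix_nd rxV by blast
  hence "r x = x" using aut_inj[OF r rxV x] by simp
  thus False using ne by simp
qed

lemma rist_lift: assumes r: "r \<in> CC d" and x: "x \<in> V d"
  and fix_nd: "\<And>u. u \<in> V d \<Longrightarrow> \<not> prefix x u \<Longrightarrow> r u = u"
  shows "r = lift d x (sec d r x)"
proof (rule ext)
  fix w show "r w = lift d x (sec d r x) w"
  proof (cases "w \<in> V d \<and> prefix x w")
    case True
    then obtain u where u: "w = x @ u" using prefix_def by blast
    have uV: "u \<in> V d" using True u by simp
    show ?thesis using sec_app[OF r x uV] rist_fix[OF r x fix_nd] True by (simp add: u lift_desc)
  next
    case False thus ?thesis using fix_nd aut_out[OF r] by (auto simp: lift_def)
  qed
qed

lemma Lev1_cases: "x \<in> Lev d 1 \<Longrightarrow> y \<in> Lev d 1 \<Longrightarrow> prefix x w \<Longrightarrow> prefix y w \<Longrightarrow> x = y"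
proof -
  assume "x \<in> Lev d 1" "y \<in> Lev d 1" "prefix x w" "prefix y w"
  moreover have "length x = length y" using calculation by (simp add: Lev_def)
  ultimately show ?thesis using prefix_same_len by blast
qed

lemma Lev_V: "x \<in> Lev d n \<Longrightarrow> x \<in> V d" by (simp add: Lev_def)


definition comb :: "nat \<Rightarrow> nat list set \<Rightarrow> (nat list \<Rightarrow> nat list \<Rightarrow> nat list) \<Rightarrow> (nat list \<Rightarrow> nat list)" where
  "comb d S k = (\<lambda>w. if w \<in> V d \<and> w \<noteq> [] \<and> take 1 w \<in> S then take 1 w @ k (take 1 w) (drop 1 w) else w)"

lemma comb_empty: "comb d {} k = id" by (rule ext) (simp add: comb_def)

lemma prefix_len1: "length x = 1 \<Longrightarrow> prefix x w \<longleftrightarrow> w \<noteq> [] \<and> take 1 w = x"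
  by (cases w) (auto simp: prefix_iff_take)

lemma comb_insert: assumes xL: "x \<in> Lev d 1" and xS: "x \<notin> S" and SL: "S \<subseteq> Lev d 1"
  shows "comb d (insert x S) k = comb d S k \<otimes>\<^bsub>AutT d\<^esub> lift d x (k x)"
proof (rule ext)
  fix w
  have lx: "length x = 1" using xL by (simp add: Lev_def)
  show "comb d (insert x S) k w = (comb d S k \<otimes>\<^bsub>AutT d\<^esub> lift d x (k x)) w"
  proof (cases "w \<in> V d \<and> w \<noteq> []")
    case True
    show ?thesis
    proof (cases "take 1 w = x")
      case tx: True
      have "prefix x w" using prefix_len1[OF lx] True tx by simp
      thus ?thesis using True tx xS lx by (simp add: comb_def lift_def)
    next
      case tx: False
      show ?thesis
      proof (cases "take 1 w \<in> S")
        case True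
        let ?t = "take 1 w"
        have "\<not> prefix x (?t @ k ?t (drop 1 w))" using prefix_len1[OF lx] tx True \<open>w \<in> V d \<and> w \<noteq> []\<close>
          by (cases w) auto
        thus ?thesis using True \<open>w \<in> V d \<and> w \<noteq> []\<close> tx by (auto simp: comb_def lift_def)
      next
        case False
        have "\<not> prefix x w" using prefix_len1[OF lx] tx by simp
        thus ?thesis using False tx \<open>w \<in> V d \<and> w \<noteq> []\<close> by (simp add: comb_def lift_def)
      qed
    qed
  next
    case False
    have "\<not> (w \<in> V d \<and> prefix x w)" using False prefix_len1[OF lx] by auto
    thus ?thesis using False by (auto simp: comb_def lift_def)
  qed
qed

lemma comb_in: assumes fin: "finite S" and SL: "S \<subseteq> Lev d 1"
  and kC: "\<And>x. x \<in> S \<Longrightarrow> k x \<in> CC d" and sgK: "subgroup K (AutT d)"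
  and kH: "\<And>x. x \<in> S \<Longrightarrow> lift d x (k x) \<in> K"
  shows "comb d S k \<in> K"
  using fin SL kC kH
proof (induction S rule: finite_induct)
  case empty thus ?case using subgroup.one_closed[OF sgK] comb_empty one_AutT by metis
next
  case (insert x S)
  have "comb d (insert x S) k = comb d S k \<otimes>\<^bsub>AutT d\<^esub> lift d x (k x)"
    using comb_insert insert by blast
  moreover have "comb d S k \<in> K" using insert by blast
  moreover have "lift d x (k x) \<in> K" using insert by blast
  ultimately show ?case using subgroup.m_closed[OF sgK] by (simp del: mult_AutT)
qed

lemma finite_Lev: "finite (Lev d n)"
proof -
  have "Lev d n \<subseteq> Vle d n" by (auto simp: Lev_def Vle_def)
  thus ?thesis using finite_Vle finite_subset by blast
qed

lemma reps:
  assumes "finite ((\<lambda>a. K #>\<^bsub>M\<^esub> a) ` S)"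
  shows "\<exists>R. finite R \<and> R \<subseteq> S \<and> (\<forall>a\<in>S. \<exists>r\<in>R. K #>\<^bsub>M\<^esub> a = K #>\<^bsub>M\<^esub> r)"
proof -
  let ?c = "\<lambda>C. SOME a. a \<in> S \<and> C = K #>\<^bsub>M\<^esub> a"
  let ?R = "?c ` ((\<lambda>a. K #>\<^bsub>M\<^esub> a) ` S)"
  have sp: "\<And>a. a \<in> S \<Longrightarrow> ?c (K #>\<^bsub>M\<^esub> a) \<in> S \<and> K #>\<^bsub>M\<^esub> a = K #>\<^bsub>M\<^esub> ?c (K #>\<^bsub>M\<^esub> a)"
    by (rule someI_ex) blast
  show ?thesis
  proof (intro exI conjI)
    show "finite ?R" using assms by blast
    show "?R \<subseteq> S" using sp by blast
    show "\<forall>a\<in>S. \<exists>r\<in>?R. K #>\<^bsub>M\<^esub> a = K #>\<^bsub>M\<^esub> r" using sp by blast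
  qed
qed

context setting begin

lemma Rist_sub: "Rist d H n \<subseteq> H"
  unfolding Rist_def by (rule A.generate_subgroup_incl[OF _ sgH]) (auto simp: rist_def)

lemma rist_one_prop:
  assumes h: "h \<in> rist d H y" and y: "y \<in> Lev d 1" and x: "x \<in> Lev d 1"
  shows "h x = x \<and> lift d x (sec d h x) \<in> H"
proof -
  have hH: "h \<in> H" and hC: "h \<in> CC d" using h HC by (auto simp: rist_def)
  have nd: "\<And>u. u \<in> V d \<Longrightarrow> \<not> prefix y u \<Longrightarrow> h u = u" using h by (auto simp: rist_def)
  have yV: "y \<in> V d" and xV: "x \<in> V d" using x y by (auto simp: Lev_def)
  show ?thesis
  proof (cases "x = y")
    case True
    have "h = lift d y (sec d h y)" using rist_lift[OF hC yV nd] .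
    thus ?thesis using rist_fix[OF hC yV nd] True hH by simp
  next
    case False
    have hx: "h x = x" using nd[OF xV] Lev1_cases[OF y x] False by blast
    have "sec d h x = id"
    proof (rule ext)
      fix u show "sec d h x u = id u"
      proof (cases "u \<in> V d")
        case True
        have "\<not> prefix y (x @ u)" using Lev1_cases[OF y x, of "x @ u"] False by auto
        thus ?thesis using nd[of "x @ u"] True xV by (simp add: sec_def)
      qed (simp add: sec_def)
    qed
    thus ?thesis using hx lift_id subgroup.one_closed[OF sgH] by simp
  qed
qed

lemma Rist1_prop:
  assumes r: "r \<in> Rist d H 1"
  shows "r \<in> H \<and> (\<forall>x\<in>Lev d 1. r x = x \<and> lift d x (sec d r x) \<in> H)"
  using r unfolding Rist_def
proof (induction rule: generate.induct)
  case one
  have "id \<in> H" using subgroup.one_closed[OF sgH] by simp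
  moreover have "\<forall>x\<in>Lev d 1. id x = x \<and> lift d x (sec d id x) \<in> H"
  proof
    fix x assume "x \<in> Lev d 1"
    hence "sec d id x = id" using sec_id Lev_V by blast
    thus "id x = x \<and> lift d x (sec d id x) \<in> H" using lift_id \<open>id \<in> H\<close> by simp
  qed
  ultimately show ?case unfolding one_AutT by blast
next
  case (incl h)
  then obtain y where y: "y \<in> Lev d 1" and h: "h \<in> rist d H y" by blast
  thus ?case using rist_one_prop by (auto simp: rist_def)
next
  case (inv h)
  then obtain y where y: "y \<in> Lev d 1" and h: "h \<in> rist d H y" by blast
  have hC: "h \<in> CC d" using h HC by (auto simp: rist_def)
  have "inv\<^bsub>A\<^esub> h \<in> rist d H y"
    unfolding rist_def
  proof (intro CollectI conjI ballI impI)
    show "inv\<^bsub>A\<^esub> h \<in> H" using h subgroup.m_inv_closed[OF sgH] by (auto simp: rist_def)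
    fix u assume "u \<in> V d" "\<not> prefix y u"
    hence "h u = u" using h by (auto simp: rist_def)
    thus "(inv\<^bsub>A\<^esub> h) u = u" using inv_app2[OF hC, of u] by simp
  qed
  thus ?case using rist_one_prop y by (auto simp: rist_def)
next
  case (eng h1 h2)
  have h1C: "h1 \<in> CC d" and h2C: "h2 \<in> CC d" using eng HC by auto
  have "h1 \<otimes>\<^bsub>A\<^esub> h2 \<in> H" using subgroup.m_closed[OF sgH] eng by blast
  moreover have "(h1 \<otimes>\<^bsub>A\<^esub> h2) x = x \<and> lift d x (sec d (h1 \<otimes>\<^bsub>A\<^esub> h2) x) \<in> H" if x: "x \<in> Lev d 1" for x
  proof -
    have xV: "x \<in> V d" using x Lev_V by blast
    have f1: "h1 x = x" and f2: "h2 x = x" using eng x by auto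
    have "sec d (h1 \<otimes>\<^bsub>A\<^esub> h2) x = sec d h1 x \<otimes>\<^bsub>A\<^esub> sec d h2 x"
      using sec_mult[OF h1C h2C xV] f1 by (simp del: mult_AutT)
    hence "lift d x (sec d (h1 \<otimes>\<^bsub>A\<^esub> h2) x) = lift d x (sec d h1 x) \<otimes>\<^bsub>A\<^esub> lift d x (sec d h2 x)"
      using lift_mult[OF xV sec_carrier[OF h1C xV] sec_carrier[OF h2C xV]] by (simp del: mult_AutT)
    moreover have "lift d x (sec d h1 x) \<in> H" "lift d x (sec d h2 x) \<in> H" using eng x by auto
    ultimately show ?thesis using subgroup.m_closed[OF sgH] f1 f2 by simp
  qed
  ultimately show ?case by blast
qed

end

definition Lset :: "nat \<Rightarrow> (nat list \<Rightarrow> nat list) set \<Rightarrow> nat list \<Rightarrow> (nat list \<Rightarrow> nat list) set" where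
  "Lset d H x = {k \<in> CC d. lift d x k \<in> H}"

context setting begin

lemma open_sub:
  assumes sgK: "subgroup K A" and KH: "K \<subseteq> H"
    and clK: "\<And>g. g \<in> CC d \<Longrightarrow> (\<forall>n. \<exists>k\<in>K. restr d n k = restr d n g) \<Longrightarrow> g \<in> K"
    and fin: "finite ((\<lambda>h. K #>\<^bsub>A\<^esub> h) ` H)"
  shows "\<exists>M. \<forall>h\<in>H. restr d M h = id \<longrightarrow> h \<in> K"
proof (rule ccontr)
  assume "\<not> ?thesis"
  hence "\<forall>M. \<exists>s. s \<in> H \<and> restr d M s = id \<and> s \<notin> K" by blast
  then obtain s where s: "\<And>M. s M \<in> H \<and> restr d M (s M) = id \<and> s M \<notin> K" by metis
  let ?f = "\<lambda>M. K #>\<^bsub>A\<^esub> s M"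
  have "?f ` UNIV \<subseteq> (\<lambda>h. K #>\<^bsub>A\<^esub> h) ` H" using s by blast
  hence "finite (?f ` UNIV)" using fin finite_subset by blast
  then obtain y where y: "y \<in> ?f ` UNIV" and inf: "infinite (?f -` {y})"
    using inf_img_fin_dom[of ?f UNIV] by auto
  obtain M0 where M0: "y = ?f M0" using y by blast
  have s0C: "s M0 \<in> CC d" using s HC by blast
  have "\<forall>n. \<exists>k\<in>K. restr d n k = restr d n (inv\<^bsub>A\<^esub> s M0)"
  proof
    fix n
    obtain M where M: "M \<in> ?f -` {y}" and nM: "n \<le> M"
      using inf unfolding infinite_nat_iff_unbounded_le by blast
    have eq: "K #>\<^bsub>A\<^esub> s M = K #>\<^bsub>A\<^esub> s M0" using M M0 by simp
    have sMC: "s M \<in> CC d" using s HC by blast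
    have "s M \<in> K #>\<^bsub>A\<^esub> s M" unfolding rcos_AutT using subgroup.one_closed[OF sgK]
      by (intro image_eqI[where x="\<one>\<^bsub>A\<^esub>"]) auto
    then obtain k where kK: "k \<in> K" and sk: "s M = k \<otimes>\<^bsub>A\<^esub> s M0" using eq unfolding rcos_AutT by auto
    have kC: "k \<in> CC d" using kK KH HC by blast
    have kk: "k = s M \<otimes>\<^bsub>A\<^esub> inv\<^bsub>A\<^esub> s M0" using sk kC s0C by (simp add: A.m_assoc del: mult_AutT one_AutT)
    have rn: "restr d n (s M) = id" using restr_mono[of d M "s M" id n] s nM restr_one by metis
    have "restr d n k = restr d n (s M) \<otimes>\<^bsub>AutTn d n\<^esub> restr d n (inv\<^bsub>A\<^esub> s M0)"
      using kk restr_mult[OF sMC A.inv_closed[OF s0C]] by (simp del: mult_AutT mult_AutTn)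
    also have "\<dots> = restr d n (inv\<^bsub>A\<^esub> s M0)" using rn by simp
    finally show "\<exists>k\<in>K. restr d n k = restr d n (inv\<^bsub>A\<^esub> s M0)" using kK by blast
  qed
  hence "inv\<^bsub>A\<^esub> s M0 \<in> K" using clK A.inv_closed[OF s0C] by blast
  hence "s M0 \<in> K" using subgroup.m_inv_closed[OF sgK] A.inv_inv[OF s0C] by metis
  thus False using s by blast
qed

lemma Lset_sub: "x \<in> V d \<Longrightarrow> Lset d H x \<subseteq> H"
  unfolding Lset_def using sec_in[OF frH] sec_lift by fastforce

lemma Lset_subgroup: assumes x: "x \<in> V d" shows "subgroup (Lset d H x) A"
proof (rule A.subgroupI)
  show "Lset d H x \<subseteq> CC d" by (auto simp: Lset_def)
  show "Lset d H x \<noteq> {}" using subgroup.one_closed[OF sgH] lift_id A.one_closed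
    unfolding Lset_def by (metis (mono_tags, lifting) empty_iff mem_Collect_eq one_AutT)
next
  fix k assume k: "k \<in> Lset d H x"
  have kC: "k \<in> CC d" and lH: "lift d x k \<in> H" using k by (auto simp: Lset_def)
  have iC: "inv\<^bsub>A\<^esub> k \<in> CC d" using A.inv_closed[OF kC] .
  have "lift d x (inv\<^bsub>A\<^esub> k) \<otimes>\<^bsub>A\<^esub> lift d x k = lift d x (inv\<^bsub>A\<^esub> k \<otimes>\<^bsub>A\<^esub> k)"
    using lift_mult[OF x iC kC] by simp
  also have "\<dots> = \<one>\<^bsub>A\<^esub>" using A.l_inv[OF kC] lift_id by (simp del: mult_AutT)
  finally have "inv\<^bsub>A\<^esub> (lift d x k) = lift d x (inv\<^bsub>A\<^esub> k)"
    using A.inv_equality lift_carrier[OF x kC] lift_carrier[OF x iC] by blast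
  hence "lift d x (inv\<^bsub>A\<^esub> k) \<in> H" using subgroup.m_inv_closed[OF sgH lH] by simp
  thus "inv\<^bsub>A\<^esub> k \<in> Lset d H x" using iC by (simp add: Lset_def)
next
  fix k1 k2 assume k1: "k1 \<in> Lset d H x" and k2: "k2 \<in> Lset d H x"
  have "k1 \<in> CC d" "k2 \<in> CC d" "lift d x k1 \<in> H" "lift d x k2 \<in> H" using k1 k2 by (auto simp: Lset_def)
  thus "k1 \<otimes>\<^bsub>A\<^esub> k2 \<in> Lset d H x" unfolding Lset_def
    using lift_mult[OF x] subgroup.m_closed[OF sgH] A.m_closed by (simp del: mult_AutT)
qed

lemma Lset_closed: assumes x: "x \<in> V d" and g: "g \<in> CC d"
  and ap: "\<forall>n. \<exists>k\<in>Lset d H x. restr d n k = restr d n g"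
  shows "g \<in> Lset d H x"
proof -
  have "\<forall>n. \<exists>h\<in>H. restr d n h = restr d n (lift d x g)"
  proof
    fix n
    obtain k where k: "k \<in> Lset d H x" and rk: "restr d n k = restr d n g" using ap by blast
    have "restr d n (lift d x k) = restr d n (lift d x g)"
      unfolding restr_eq_iff
    proof
      fix w assume w: "w \<in> Vle d n"
      show "lift d x k w = lift d x g w"
      proof (cases "w \<in> V d \<and> prefix x w")
        case True
        have "drop (length x) w \<in> Vle d n" using w V_drop by (auto simp: Vle_def)
        hence "k (drop (length x) w) = g (drop (length x) w)" using rk restr_eq_iff by blast
        thus ?thesis by (simp add: lift_def)
      next
        case False thus ?thesis unfolding lift_def by auto
      qed
    qed
    thus "\<exists>h\<in>H. restr d n h = restr d n (lift d x g)" using k by (auto simp: Lset_def)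
  qed
  hence "lift d x g \<in> H" using clH lift_carrier[OF x g] unfolding closed_cong_def by blast
  thus ?thesis using g by (simp add: Lset_def)
qed

lemma Lset_findex: assumes x: "x \<in> Lev d 1"
  shows "finite ((\<lambda>k. Lset d H x #>\<^bsub>A\<^esub> k) ` H)"
proof -
  have xV: "x \<in> V d" using x Lev_V by blast
  have "finite (cosets_in A H (Rist d H 1))" using brH by (simp add: branch_def)
  then obtain R where Rfin: "finite R" and RH: "R \<subseteq> H"
    and Rrep: "\<forall>a\<in>H. \<exists>r\<in>R. Rist d H 1 #>\<^bsub>A\<^esub> a = Rist d H 1 #>\<^bsub>A\<^esub> r"
    using reps[where K="Rist d H 1" and M=A and S=H] unfolding cosets_in_eq by blast
  have "(\<lambda>k. Lset d H x #>\<^bsub>A\<^esub> k) ` H \<subseteq> (\<lambda>r. Lset d H x #>\<^bsub>A\<^esub> sec d r x) ` R"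
  proof
    fix c assume "c \<in> (\<lambda>k. Lset d H x #>\<^bsub>A\<^esub> k) ` H"
    then obtain k where kH: "k \<in> H" and c: "c = Lset d H x #>\<^bsub>A\<^esub> k" by blast
    have "k \<in> {sec d g x | g. g \<in> H \<and> g x = x}" using frH xV kH unfolding fractal_def by blast
    then obtain g where gH: "g \<in> H" and gx: "g x = x" and kg: "k = sec d g x" by blast
    obtain r where rR: "r \<in> R" and gr: "Rist d H 1 #>\<^bsub>A\<^esub> g = Rist d H 1 #>\<^bsub>A\<^esub> r"
      using Rrep gH by blast
    have gC: "g \<in> CC d" and rC: "r \<in> CC d" using gH rR RH HC by auto
    have "g \<in> Rist d H 1 #>\<^bsub>A\<^esub> g" unfolding rcos_AutT unfolding Rist_def
      using generate.one[of A] by (intro image_eqI[where x="\<one>\<^bsub>A\<^esub>"]) auto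
    then obtain \<rho> where \<rho>: "\<rho> \<in> Rist d H 1" and g\<rho>: "g = \<rho> \<otimes>\<^bsub>A\<^esub> r" using gr unfolding rcos_AutT by auto
    have \<rho>p: "\<rho> \<in> H" "\<rho> x = x" "lift d x (sec d \<rho> x) \<in> H" using Rist1_prop[OF \<rho>] x by auto
    have \<rho>C: "\<rho> \<in> CC d" using \<rho>p HC by auto
    have "k = sec d \<rho> x \<otimes>\<^bsub>A\<^esub> sec d r x" using kg g\<rho> sec_mult[OF \<rho>C rC xV] \<rho>p by (simp del: mult_AutT)
    moreover have "sec d \<rho> x \<in> Lset d H x" using \<rho>p sec_carrier[OF \<rho>C xV] by (simp add: Lset_def)
    ultimately have "k \<in> Lset d H x #>\<^bsub>A\<^esub> sec d r x" unfolding rcos_AutT by (auto simp del: mult_AutT)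
    hence "Lset d H x #>\<^bsub>A\<^esub> sec d r x = Lset d H x #>\<^bsub>A\<^esub> k"
      using A.repr_independence[OF _ sec_carrier[OF rC xV] Lset_subgroup[OF xV]] by blast
    thus "c \<in> (\<lambda>r. Lset d H x #>\<^bsub>A\<^esub> sec d r x) ` R" using c rR by auto
  qed
  thus ?thesis using Rfin finite_subset by blast
qed

lemma lifting: "\<exists>M. \<forall>x\<in>Lev d 1. \<forall>h\<in>H. restr d M h = id \<longrightarrow> lift d x h \<in> H"
proof -
  have ex: "\<exists>M. \<forall>h\<in>H. restr d M h = id \<longrightarrow> lift d x h \<in> H" if x: "x \<in> Lev d 1" for x
  proof -
    have xV: "x \<in> V d" using x Lev_V by blast
    obtain M where M: "\<forall>h\<in>H. restr d M h = id \<longrightarrow> h \<in> Lset d H x"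
      using open_sub[OF Lset_subgroup[OF xV] Lset_sub[OF xV] Lset_closed[OF xV] Lset_findex[OF x]] by blast
    thus ?thesis by (auto simp: Lset_def)
  qed
  then obtain Mf where Mf: "\<And>x. x \<in> Lev d 1 \<Longrightarrow> \<forall>h\<in>H. restr d (Mf x) h = id \<longrightarrow> lift d x h \<in> H"
    by metis
  let ?M = "Max (Mf ` Lev d 1)"
  have "\<forall>x\<in>Lev d 1. \<forall>h\<in>H. restr d ?M h = id \<longrightarrow> lift d x h \<in> H"
  proof (intro ballI impI)
    fix x h assume x: "x \<in> Lev d 1" and h: "h \<in> H" and r: "restr d ?M h = id"
    have "Mf x \<le> ?M" using x finite_Lev by simp
    hence "restr d (Mf x) h = id" using restr_mono[of d ?M h id "Mf x"] r restr_one by metis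
    thus "lift d x h \<in> H" using Mf x h by blast
  qed
  thus ?thesis by blast
qed

end

lemma GP_C: "GP d D P \<subseteq> CC d" by (auto simp: GP_def)

lemma GP_mult: assumes sgP: "subgroup P (AutTn d D)" and g: "g \<in> GP d D P" and k: "k \<in> GP d D P"
  shows "g \<otimes>\<^bsub>AutT d\<^esub> k \<in> GP d D P"
proof -
  have gC: "g \<in> CC d" and kC: "k \<in> CC d" using g k by (auto simp: GP_def)
  have "secn d D (g \<otimes>\<^bsub>AutT d\<^esub> k) v \<in> P" if v: "v \<in> V d" for v
  proof -
    have gv: "g v \<in> V d" using aut_V[OF gC v] .
    have "secn d D (g \<otimes>\<^bsub>AutT d\<^esub> k) v = secn d D g v \<otimes>\<^bsub>AutTn d D\<^esub> secn d D k (g v)"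
      unfolding secn_def using sec_mult[OF gC kC v] restr_mult[OF sec_carrier[OF gC v] sec_carrier[OF kC gv]]
      by (simp del: mult_AutT mult_AutTn)
    moreover have "secn d D g v \<in> P" "secn d D k (g v) \<in> P" using g k v gv by (auto simp: GP_def)
    ultimately show ?thesis using subgroup.m_closed[OF sgP] by (simp del: mult_AutTn)
  qed
  thus ?thesis using monoid.m_closed[OF group.is_monoid[OF group_AutT] gC kC] by (simp add: GP_def del: mult_AutT)
qed

lemma GP_inv: assumes sgP: "subgroup P (AutTn d D)" and g: "g \<in> GP d D P"
  shows "inv\<^bsub>AutT d\<^esub> g \<in> GP d D P"
proof -
  have gC: "g \<in> CC d" using g by (auto simp: GP_def)
  have iC: "inv\<^bsub>AutT d\<^esub> g \<in> CC d" using group.inv_closed[OF group_AutT gC] .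
  have "secn d D (inv\<^bsub>AutT d\<^esub> g) v \<in> P" if v: "v \<in> V d" for v
  proof -
    have iv: "(inv\<^bsub>AutT d\<^esub> g) v \<in> V d" using aut_V[OF iC v] .
    have "secn d D (inv\<^bsub>AutT d\<^esub> g) v = inv\<^bsub>AutTn d D\<^esub> (secn d D g ((inv\<^bsub>AutT d\<^esub> g) v))"
      unfolding secn_def using sec_inv[OF gC v] restr_inv[OF sec_carrier[OF gC iv]] by simp
    moreover have "secn d D g ((inv\<^bsub>AutT d\<^esub> g) v) \<in> P" using g iv by (auto simp: GP_def)
    ultimately show ?thesis using subgroup.m_inv_closed[OF sgP] by simp
  qed
  thus ?thesis using iC by (simp add: GP_def)
qed

lemma GP_sec: assumes g: "g \<in> GP d D P" and x: "x \<in> V d" shows "sec d g x \<in> GP d D P"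
proof -
  have gC: "g \<in> CC d" using g by (auto simp: GP_def)
  have "secn d D (sec d g x) v \<in> P" if v: "v \<in> V d" for v
    using g x v sec_sec[OF gC x v] by (auto simp: GP_def secn_def)
  thus ?thesis using sec_carrier[OF gC x] by (simp add: GP_def)
qed



context setting begin

lemma finite_type: "\<exists>D P. D \<ge> 1 \<and> subgroup P (AutTn d D) \<and> H = GP d D P"
proof -
  obtain M where M: "\<And>x h. x \<in> Lev d 1 \<Longrightarrow> h \<in> H \<Longrightarrow> restr d M h = id \<Longrightarrow> lift d x h \<in> H"
    using lifting by blast
  define D where "D = Suc M"
  define P where "P = restr d D ` H"
  have sgP: "subgroup P (AutTn d D)"
    unfolding P_def using group_hom.subgroup_img_is_subgroup[OF restr_group_hom sgH] .
  have HGP: "H \<subseteq> GP d D P"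
  proof
    fix h assume h: "h \<in> H"
    have "\<forall>v\<in>V d. secn d D h v \<in> P" using sec_in[OF frH h] by (auto simp: secn_def P_def)
    thus "h \<in> GP d D P" using h HC by (auto simp: GP_def)
  qed
  have claim: "\<forall>g\<in>GP d D P. \<exists>h\<in>H. restr d n h = restr d n g" for n
  proof (induction n)
    case 0
    show ?case
    proof
      fix g assume g: "g \<in> GP d D P"
      have gC: "g \<in> CC d" using g by (auto simp: GP_def)
      have "secn d D g [] \<in> P" using g by (auto simp: GP_def)
      then obtain h where "h \<in> H" "restr d D h = restr d D g" by (auto simp: P_def secn_def sec_nil[OF gC])
      thus "\<exists>h\<in>H. restr d 0 h = restr d 0 g" using restr_mono by blast
    qed
  next
    case (Suc n)
    show ?case
    proof
      fix g assume g: "g \<in> GP d D P"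
      have gC: "g \<in> CC d" using g by (auto simp: GP_def)
      have "secn d D g [] \<in> P" using g by (auto simp: GP_def)
      then obtain h0 where h0: "h0 \<in> H" and rh0: "restr d D h0 = restr d D g"
        by (auto simp: P_def secn_def sec_nil[OF gC])
      show "\<exists>h\<in>H. restr d (Suc n) h = restr d (Suc n) g"
      proof (cases "Suc n \<le> D")
        case True thus ?thesis using h0 rh0 restr_mono by blast
      next
        case False
        hence nD: "D \<le> n" by simp
        have h0C: "h0 \<in> CC d" using h0 HC by auto
        define g' where "g' = g \<otimes>\<^bsub>A\<^esub> inv\<^bsub>A\<^esub> h0"
        have g'GP: "g' \<in> GP d D P" unfolding g'_def
          using GP_mult[OF sgP g GP_inv[OF sgP]] HGP h0 by blast
        have g'C: "g' \<in> CC d" using g'GP by (auto simp: GP_def)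
        have gg': "g = g' \<otimes>\<^bsub>A\<^esub> h0" unfolding g'_def using gC h0C
          by (simp add: A.m_assoc del: mult_AutT one_AutT)
        have rg': "restr d D g' = id"
        proof -
          interpret B: group "AutTn d D" by (rule group_AutTn)
          have "restr d D g' = restr d D g \<otimes>\<^bsub>AutTn d D\<^esub> inv\<^bsub>AutTn d D\<^esub> (restr d D h0)"
            unfolding g'_def using restr_mult[OF gC A.inv_closed[OF h0C]] restr_inv[OF h0C]
            by (simp del: mult_AutT mult_AutTn)
          also have "\<dots> = \<one>\<^bsub>AutTn d D\<^esub>" using rh0 restr_carrier[OF h0C]
            by (metis B.r_inv)
          finally show ?thesis by simp
        qed
        have fixD: "\<And>w. w \<in> Vle d D \<Longrightarrow> g' w = w" using rg' unfolding restr_id_iff by blast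
        have kex: "\<exists>k\<in>H. restr d n k = restr d n (sec d g' x)" if x: "x \<in> Lev d 1" for x
        proof -
          have "sec d g' x \<in> GP d D P" using GP_sec[OF g'GP Lev_V[OF x]] .
          thus ?thesis using Suc.IH by blast
        qed
        then obtain kf where kf: "\<And>x. x \<in> Lev d 1 \<Longrightarrow> kf x \<in> H \<and> restr d n (kf x) = restr d n (sec d g' x)"
          by metis
        have g'x: "g' x = x" if x: "x \<in> Lev d 1" for x
        proof -
          have "x \<in> Vle d D" using x by (auto simp: Lev_def Vle_def D_def)
          thus ?thesis using fixD by blast
        qed
        have liftH: "lift d x (kf x) \<in> H" if x: "x \<in> Lev d 1" for x
        proof -
          have xV: "x \<in> V d" using x Lev_V by blast
          have "restr d M (sec d g' x) = id" unfolding restr_id_iff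
          proof
            fix u assume u: "u \<in> Vle d M"
            have uV: "u \<in> V d" using u by (simp add: Vle_def)
            have "x @ u \<in> Vle d D" using x u by (auto simp: Vle_def Lev_def D_def)
            hence "g' (x @ u) = x @ u" using fixD by blast
            thus "sec d g' x u = u" using sec_app[OF g'C xV uV] g'x[OF x] by simp
          qed
          moreover have "restr d M (kf x) = restr d M (sec d g' x)"
            using restr_mono[OF conjunct2[OF kf[OF x]], of M] nD D_def by simp
          ultimately show ?thesis using M[OF x] kf[OF x] by simp
        qed
        define h' where "h' = comb d (Lev d 1) kf"
        have h'H: "h' \<in> H" unfolding h'_def
          using comb_in[OF finite_Lev order_refl _ sgH] kf HC liftH by blast
        have h'C: "h' \<in> CC d" using h'H HC by auto
        have rh': "restr d (Suc n) h' = restr d (Suc n) g'"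
          unfolding restr_eq_iff
        proof
          fix w assume w: "w \<in> Vle d (Suc n)"
          have wV: "w \<in> V d" using w by (simp add: Vle_def)
          show "h' w = g' w"
          proof (cases "w = []")
            case True
            have "g' [] = []" using aut_len[OF g'C, of "[]"] by simp
            thus ?thesis using True by (simp add: h'_def comb_def)
          next
            case False
            let ?t = "take 1 w" and ?u = "drop 1 w"
            have tL: "?t \<in> Lev d 1" using False wV by (cases w) (auto simp: Lev_def V_def)
            have tV: "?t \<in> V d" using tL Lev_V by blast
            have uV: "?u \<in> V d" using wV V_drop by blast
            have uVle: "?u \<in> Vle d n" using w uV by (auto simp: Vle_def)
            have wsplit: "w = ?t @ ?u" by simp
            have "g' w = ?t @ sec d g' ?t ?u" using sec_app[OF g'C tV uV] g'x[OF tL] wsplit by metis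
            also have "sec d g' ?t ?u = kf ?t ?u" using kf[OF tL] uVle restr_eq_iff by metis
            finally show ?thesis using False wV tL by (simp add: h'_def comb_def)
          qed
        qed
        have "restr d (Suc n) (h' \<otimes>\<^bsub>A\<^esub> h0) = restr d (Suc n) g"
          using restr_mult[OF h'C h0C] restr_mult[OF g'C h0C] rh' gg' by (simp del: mult_AutT mult_AutTn)
        moreover have "h' \<otimes>\<^bsub>A\<^esub> h0 \<in> H" using subgroup.m_closed[OF sgH h'H h0] .
        ultimately show ?thesis by blast
      qed
    qed
  qed
  have "GP d D P \<subseteq> H"
  proof
    fix g assume g: "g \<in> GP d D P"
    thus "g \<in> H" using clH claim GP_C unfolding closed_cong_def by blast
  qed
  hence "H = GP d D P" using HGP by blast
  thus ?thesis using sgP D_def by (intro exI[of _ D] exI[of _ P]) auto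
qed

end

context setting begin

lemma GH_findex: "finite (cosets_in A (GH d G H) H)"
  using finite_type part2 by blast

lemma branch_GH: "branch d (GH d G H)"
  unfolding branch_def
proof (intro conjI allI)
  show "level_transitive d (GH d G H)"
    using frH H_sub_GH unfolding fractal_def level_transitive_def by blast
next
  fix n
  let ?K = "GH d G H"
  let ?R = "Rist d ?K n" and ?RH = "Rist d H n"
  have KC: "?K \<subseteq> CC d" using GH_sub_G GC by auto
  have RRH: "?RH \<subseteq> ?R" unfolding Rist_def
    by (rule A.mono_generate) (use H_sub_GH in \<open>auto simp: rist_def\<close>)
  have sgR: "subgroup ?R A" unfolding Rist_def
    by (rule A.generate_is_subgroup) (use KC in \<open>auto simp: rist_def\<close>)
  obtain R1 where R1fin: "finite R1" and R1K: "R1 \<subseteq> ?K"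
    and R1: "\<forall>a\<in>?K. \<exists>r\<in>R1. H #>\<^bsub>A\<^esub> a = H #>\<^bsub>A\<^esub> r"
    using reps[where K=H and M=A and S="?K"] GH_findex unfolding cosets_in_eq by blast
  have "finite (cosets_in A H ?RH)" using brH by (simp add: branch_def)
  then obtain R2 where R2fin: "finite R2" and R2H: "R2 \<subseteq> H"
    and R2: "\<forall>a\<in>H. \<exists>r\<in>R2. ?RH #>\<^bsub>A\<^esub> a = ?RH #>\<^bsub>A\<^esub> r"
    using reps[where K="?RH" and M=A and S=H] unfolding cosets_in_eq by blast
  have self: "a \<in> S #>\<^bsub>A\<^esub> a" if "id \<in> S" for a S
    unfolding rcos_AutT using that by (intro image_eqI[where x=id]) auto
  have idH: "id \<in> H" using subgroup.one_closed[OF sgH] by simp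
  have idRH: "id \<in> ?RH" using generate.one[of A] unfolding Rist_def by simp
  have "cosets_in A ?K ?R \<subseteq> (\<lambda>(r2, r1). ?R #>\<^bsub>A\<^esub> (r2 \<otimes>\<^bsub>A\<^esub> r1)) ` (R2 \<times> R1)"
  proof
    fix c assume "c \<in> cosets_in A ?K ?R"
    then obtain a where aK: "a \<in> ?K" and c: "c = ?R #>\<^bsub>A\<^esub> a" unfolding cosets_in_eq by blast
    obtain r1 where r1: "r1 \<in> R1" and e1: "H #>\<^bsub>A\<^esub> a = H #>\<^bsub>A\<^esub> r1" using R1 aK by blast
    have "a \<in> H #>\<^bsub>A\<^esub> r1" using self[OF idH, of a] e1 by simp
    then obtain h where hH: "h \<in> H" and ah: "a = h \<otimes>\<^bsub>A\<^esub> r1" unfolding rcos_AutT by blast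
    obtain r2 where r2: "r2 \<in> R2" and e2: "?RH #>\<^bsub>A\<^esub> h = ?RH #>\<^bsub>A\<^esub> r2" using R2 hH by blast
    have "h \<in> ?RH #>\<^bsub>A\<^esub> r2" using self[OF idRH, of h] e2 by simp
    then obtain \<rho> where \<rho>: "\<rho> \<in> ?RH" and h\<rho>: "h = \<rho> \<otimes>\<^bsub>A\<^esub> r2" unfolding rcos_AutT by blast
    have \<rho>C: "\<rho> \<in> CC d" using \<rho> Rist_sub HC by blast
    have r1C: "r1 \<in> CC d" and r2C: "r2 \<in> CC d" using r1 r2 R1K R2H KC HC by auto
    have "a = \<rho> \<otimes>\<^bsub>A\<^esub> (r2 \<otimes>\<^bsub>A\<^esub> r1)" using ah h\<rho> \<rho>C r1C r2C
      by (simp add: A.m_assoc del: mult_AutT one_AutT)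
    hence "a \<in> ?R #>\<^bsub>A\<^esub> (r2 \<otimes>\<^bsub>A\<^esub> r1)" using \<rho> RRH unfolding rcos_AutT by blast
    hence "?R #>\<^bsub>A\<^esub> (r2 \<otimes>\<^bsub>A\<^esub> r1) = ?R #>\<^bsub>A\<^esub> a"
      using A.repr_independence[OF _ A.m_closed[OF r2C r1C] sgR] by blast
    thus "c \<in> (\<lambda>(r2, r1). ?R #>\<^bsub>A\<^esub> (r2 \<otimes>\<^bsub>A\<^esub> r1)) ` (R2 \<times> R1)"
      using c r1 r2 by force
  qed
  thus "finite (cosets_in A ?K ?R)" using R1fin R2fin finite_subset by blast
qed

end

theorem proposition2p10:
  fixes d :: nat and G H :: "(nat list \<Rightarrow> nat list) set"
  assumes "d \<ge> 2"
    and "subgroup G (AutT d)"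
    and "H \<lhd> (AutT d)\<lparr>carrier := G\<rparr>"
    and "closed_cong d G" and "closed_cong d H"
    and "fractal d G" and "fractal d H"
    and "H \<noteq> {\<one>\<^bsub>AutT d\<^esub>}"
    and "branch d H"
  shows "branch d (GH d G H) \<and>
    (\<forall>D P. D \<ge> 1 \<longrightarrow> subgroup P (AutTn d D) \<longrightarrow> H = GP d D P \<longrightarrow>
       finite (cosets_in (AutT d) (GH d G H) H) \<and>
       card (cosets_in (AutT d) (GH d G H) H) =
         card (cosets_in (AutTn d D) (restr d D ` GH d G H) (restr d D ` H)))"
proof -
  interpret A: group "AutT d" by (rule group_AutT)
  have sgG: "subgroup G (AutT d)" by fact
  have sgHG: "subgroup H ((AutT d)\<lparr>carrier := G\<rparr>)" using normal_imp_subgroup[OF assms(3)] .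
  have HG: "H \<subseteq> G" using subgroup.subset[OF sgHG] by simp
  have invc: "\<And>x. x \<in> G \<Longrightarrow> inv\<^bsub>(AutT d)\<lparr>carrier := G\<rparr>\<^esub> x = inv\<^bsub>AutT d\<^esub> x"
    using A.m_inv_consistent[OF sgG] by blast
  have sgH: "subgroup H (AutT d)"
  proof (rule A.subgroupI)
    show "H \<subseteq> carrier (AutT d)" using HG subgroup.subset[OF sgG] by blast
    show "H \<noteq> {}" using subgroup.one_closed[OF sgHG] by blast
  next
    fix h assume "h \<in> H"
    thus "inv\<^bsub>AutT d\<^esub> h \<in> H" using subgroup.m_inv_closed[OF sgHG] invc HG by fastforce
  next
    fix h k assume "h \<in> H" "k \<in> H"
    thus "h \<otimes>\<^bsub>AutT d\<^esub> k \<in> H" using subgroup.m_closed[OF sgHG] by fastforce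
  qed
  have nrm: "\<And>x h. x \<in> G \<Longrightarrow> h \<in> H \<Longrightarrow> x \<otimes>\<^bsub>AutT d\<^esub> h \<otimes>\<^bsub>AutT d\<^esub> inv\<^bsub>AutT d\<^esub> x \<in> H"
  proof -
    fix x h assume x: "x \<in> G" and h: "h \<in> H"
    have "x \<otimes>\<^bsub>(AutT d)\<lparr>carrier := G\<rparr>\<^esub> h \<otimes>\<^bsub>(AutT d)\<lparr>carrier := G\<rparr>\<^esub> inv\<^bsub>(AutT d)\<lparr>carrier := G\<rparr>\<^esub> x \<in> H"
      using normal.inv_op_closed2[OF assms(3)] x h by simp
    thus "x \<otimes>\<^bsub>AutT d\<^esub> h \<otimes>\<^bsub>AutT d\<^esub> inv\<^bsub>AutT d\<^esub> x \<in> H" using invc[OF x] by simp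
  qed
  interpret S: setting d G H
    by (rule setting.intro[OF sgG sgH HG nrm assms(5) assms(6) assms(7) assms(9)])
  show ?thesis using S.branch_GH S.part2 by blast
qed

end
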